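(* For all $r \in \mathbb{R}^3 \setminus \{0\}$ and all $f_* \in \mathbb{R}^3$, $$f\big(r, c_1(r,f_* ), c_2(r,f_* )\big) = f_*,$$ where $f$, $c_1$, $c_2$ are the functions defined in the context below.
   Context: Notation: $\|\cdot\|$ is the Euclidean norm. For $a=(a_1,a_2,a_3)^{\mathrm T}\in\mathbb{R}^3$, $[a]_\times$ is the skew-symmetric matrix with rows $(0,-a_3,a_2)$, $(a_3,0,-a_1)$, $(-a_2,a_1,0)$, so $[a]_\times b = a\times b$. $\operatorname{sgn}:\mathbb{R}\to\{-1,0,1\}$ is the sign function with $\operatorname{sgn}(0)=0$. Force function: for $r\in\mathbb{R}^3\setminus\{0\}$ and $p,q\in\mathbb{R}^3$, $$f(r,p,q) \triangleq \frac{q^{\mathrm T} r}{\|r\|}\,p + \frac{p^{\mathrm T} r}{\|r\|}\,q + \frac{p^{\mathrm T} q}{\|r\|}\,r - 5\,\frac{(p^{\mathrm T} r)(q^{\mathrm T} r)}{\|r\|^3}\,r.$$ Rotation-like matrix: $R(r,f_* )\in\mathbb{R}^{3\times 3}$ is defined as follows. If $[r]_\times f_*\neq 0$, then $R(r,f_* )$ is the matrix whose three rows are (the transposes of) the column vectors $$\frac{r}{\|r\|},\qquad \frac{(r^{\mathrm T} r) f_* - (r^{\mathrm T} f_* )\, r}{\|r\|\,\|[r]_\times f_*\|},\qquad \frac{[r]_\times f_*}{\|[r]_\times f_*\|};$$ if $[r]_\times f_* = 0$, then $R(r,f_* )$ is the matrix whose first row is $r^{\mathrm T}/\|r\|$ and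 whose second and third rows are zero. Auxiliary scalars: $$\Phi_1(r,f_* ) \triangleq \sqrt{\|[r]_\times f_*\|^2 + \|r\|^2\|f_*\|^2},\qquad \Phi_2(r,f_* ) \triangleq \big(2-\operatorname{sgn}(r^{\mathrm T} f_* )^2\big)\,\Phi_1(r,f_* ),$$ $$a_x \triangleq -\frac{\operatorname{sgn}(r^{\mathrm T} f_* )}{2}\Big(\frac{|r^{\mathrm T} f_*| + \Phi_1}{\|r\|}\Big)^{1/2},\qquad a_y \triangleq \frac{1}{\sqrt2}\Big(\frac{-|r^{\mathrm T} f_*| + \Phi_2}{\|r\|}\Big)^{1/2},$$ $$b_x \triangleq \frac{1}{2}\Big(\frac{|r^{\mathrm T} f_*| + \Phi_2}{\|r\|}\Big)^{1/2},\qquad b_y \triangleq -\frac{\operatorname{sgn}(r^{\mathrm T} f_* )}{\sqrt2}\Big(\frac{-|r^{\mathrm T} f_*| + \Phi_1}{\|r\|}\Big)^{1/2},$$ all evaluated at $(r,f_* )$. Let $a(r,f_* ) \triangleq (a_x, a_y, 0)^{\mathrm T}$ and $b(r,f_* ) \triangleq (b_x,b_y,0)^{\mathrm T}$. Finally $$c_1(r,f_* ) \triangleq R(r,f_* )^{\mathrm T} a(r,f_* ),\qquad c_2(r,f_* ) \triangleq R(r,f_* )^{\mathrm T} b(r,f_* ).$$ *)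

theory Defs
  imports "HOL-Analysis.Analysis"
begin

text \<open>Vectors in R^3 are represented as real^3; cross product is cross3 (HOL-Analysis.Cross3),
  inner product is the Euclidean inner product, sgn on reals satisfies sgn 0 = 0.\<close>

definition force :: "real^3 \<Rightarrow> real^3 \<Rightarrow> real^3 \<Rightarrow> real^3" where
  "force r p q =
     ((q \<bullet> r) / norm r) *\<^sub>R p + ((p \<bullet> r) / norm r) *\<^sub>R q + ((p \<bullet> q) / norm r) *\<^sub>R r
     - (5 * (p \<bullet> r) * (q \<bullet> r) / norm r ^ 3) *\<^sub>R r"

definition Rmat :: "real^3 \<Rightarrow> real^3 \<Rightarrow> real^3^3" where
  "Rmat r fs =
     (if cross3 r fs \<noteq> 0 then
        vector [ (1 / norm r) *\<^sub>R r,
                 (1 / (norm r * norm (cross3 r fs))) *\<^sub>R ((r \<bullet> r) *\<^sub>R fs - (r \<bullet> fs) *\<^sub>R r),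
                 (1 / norm (cross3 r fs)) *\<^sub>R cross3 r fs ]
      else vector [ (1 / norm r) *\<^sub>R r, 0, 0 ])"

definition Phi1 :: "real^3 \<Rightarrow> real^3 \<Rightarrow> real" where
  "Phi1 r fs = sqrt ((norm (cross3 r fs))\<^sup>2 + (norm r)\<^sup>2 * (norm fs)\<^sup>2)"

definition Phi2 :: "real^3 \<Rightarrow> real^3 \<Rightarrow> real" where
  "Phi2 r fs = (2 - (sgn (r \<bullet> fs))\<^sup>2) * Phi1 r fs"

definition ax :: "real^3 \<Rightarrow> real^3 \<Rightarrow> real" where
  "ax r fs = - (sgn (r \<bullet> fs) / 2) * sqrt ((\<bar>r \<bullet> fs\<bar> + Phi1 r fs) / norm r)"

definition ay :: "real^3 \<Rightarrow> real^3 \<Rightarrow> real" where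
  "ay r fs = (1 / sqrt 2) * sqrt ((- \<bar>r \<bullet> fs\<bar> + Phi2 r fs) / norm r)"

definition bx :: "real^3 \<Rightarrow> real^3 \<Rightarrow> real" where
  "bx r fs = (1 / 2) * sqrt ((\<bar>r \<bullet> fs\<bar> + Phi2 r fs) / norm r)"

definition bycomp :: "real^3 \<Rightarrow> real^3 \<Rightarrow> real" where
  "bycomp r fs = - (sgn (r \<bullet> fs) / sqrt 2) * sqrt ((- \<bar>r \<bullet> fs\<bar> + Phi1 r fs) / norm r)"

definition avec :: "real^3 \<Rightarrow> real^3 \<Rightarrow> real^3" where
  "avec r fs = vector [ax r fs, ay r fs, 0]"

definition bvec :: "real^3 \<Rightarrow> real^3 \<Rightarrow> real^3" where
  "bvec r fs = vector [bx r fs, bycomp r fs, 0]"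

definition c1 :: "real^3 \<Rightarrow> real^3 \<Rightarrow> real^3" where
  "c1 r fs = transpose (Rmat r fs) *v avec r fs"

definition c2 :: "real^3 \<Rightarrow> real^3 \<Rightarrow> real^3" where
  "c2 r fs = transpose (Rmat r fs) *v bvec r fs"

end

theory Submission
  imports Defs
begin

lemma tmv: "transpose (vector [u,v,w] :: real^3^3) *v (vector [a,b,c] :: real^3) = a *\<^sub>R u + b *\<^sub>R v + c *\<^sub>R w"
  by (simp add: vec_eq_iff matrix_vector_mult_def transpose_def sum_3 forall_3)

lemma force_frame:
  fixes r e2 :: "real^3"
  assumes "r \<noteq> 0" "e2 \<bullet> r = 0"
  shows "force r ((a1/norm r) *\<^sub>R r + a2 *\<^sub>R e2) ((b1/norm r) *\<^sub>R r + b2 *\<^sub>R e2)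
     = ((-2*a1*b1 + a2*b2*(e2\<bullet>e2))/norm r) *\<^sub>R r + (a2*b1+a1*b2) *\<^sub>R e2"
proof -
  define N where "N = norm r"
  have N: "N > 0" using assms N_def by simp
  have rr: "r \<bullet> r = N^2" by (simp add: N_def power2_norm_eq_inner)
  have e2r: "r \<bullet> e2 = 0" using assms by (simp add: inner_commute)
  have i1: "((a1/N) *\<^sub>R r + a2 *\<^sub>R e2) \<bullet> r = a1 * N"
    using N by (simp add: inner_add_left assms rr power2_eq_square)
  have i2: "((b1/N) *\<^sub>R r + b2 *\<^sub>R e2) \<bullet> r = b1 * N"
    using N by (simp add: inner_add_left assms rr power2_eq_square)
  have i3: "((a1/N) *\<^sub>R r + a2 *\<^sub>R e2) \<bullet> ((b1/N) *\<^sub>R r + b2 *\<^sub>R e2) = a1*b1 + a2*b2*(e2\<bullet>e2)"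
    using N by (simp add: inner_add_left inner_add_right assms e2r rr power2_eq_square)
  show ?thesis
    unfolding force_def N_def[symmetric] i1 i2 i3
    using N by (simp add: vec_eq_iff field_simps power3_eq_cube)
qed

lemma scal:
  fixes N c d P :: real
  assumes N: "N > 0" and c: "c \<ge> 0" and P: "P = sqrt (2*c^2 + d^2)"
  defines "Q \<equiv> (2 - (sgn d)^2) * P"
  defines "ax' \<equiv> - (sgn d / 2) * sqrt ((\<bar>d\<bar> + P) / N)"
  defines "ay' \<equiv> (1 / sqrt 2) * sqrt ((- \<bar>d\<bar> + Q) / N)"
  defines "bx' \<equiv> (1 / 2) * sqrt ((\<bar>d\<bar> + Q) / N)"
  defines "by' \<equiv> - (sgn d / sqrt 2) * sqrt ((- \<bar>d\<bar> + P) / N)"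
  shows "-2*ax'*bx' + ay'*by' = d/N" "ay'*bx' + ax'*by' = c/N" "c = 0 \<longrightarrow> ay'*by' = 0"
proof -
  have Pd: "\<bar>d\<bar> \<le> P" unfolding P by (metis real_sqrt_abs real_sqrt_le_mono add_nonneg_nonneg zero_le_power2 mult_nonneg_nonneg zero_le_numeral le_add_same_cancel2)
  have PP: "P^2 = 2*c^2 + d^2" unfolding P by simp
  define X where "X = (\<bar>d\<bar> + P) / N"
  define Y where "Y = (P - \<bar>d\<bar>) / N"
  have X0: "X \<ge> 0" "Y \<ge> 0" using Pd N by (auto simp: X_def Y_def)
  have XX: "sqrt X * sqrt X = X" "sqrt Y * sqrt Y = Y" using X0 by auto
  have XY: "X * Y = 2 * c^2 / N^2" unfolding X_def Y_def using PP
    by (simp add: field_simps power2_eq_square)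
  have sXY: "sqrt X * sqrt Y = sqrt 2 * c / N"
    unfolding real_sqrt_mult[symmetric] XY using N c
    by (simp add: real_sqrt_divide real_sqrt_mult)
  have c0: "c = 0 \<Longrightarrow> Y = 0" unfolding Y_def using PP Pd
    by (metis abs_ge_zero diff_self div_0 power2_eq_iff_nonneg real_sqrt_abs P mult_zero_right power_zero_numeral add_0)
  have all: "(-2*ax'*bx' + ay'*by' = d/N) \<and> (ay'*bx' + ax'*by' = c/N) \<and> (c = 0 \<longrightarrow> ay'*by' = 0)"
  proof (cases "d = 0")
    case False
    then have d: "d > 0 \<or> d < 0" by auto
    have sg: "(sgn d)^2 = 1" using d by auto
    have Q: "Q = P" unfolding Q_def sg by simp
    have e: "ax' = - (sgn d/2) * sqrt X" "bx' = 1/2 * sqrt X" "ay' = 1/sqrt 2 * sqrt Y" "by' = - (sgn d / sqrt 2) * sqrt Y"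
      unfolding ax'_def bx'_def ay'_def by'_def Q X_def Y_def by simp_all
    have sd: "sgn d * \<bar>d\<bar> = d" by (simp add: sgn_mult_abs)
    have 1: "-2*ax'*bx' + ay'*by' = d/N" unfolding e
      using XX sd sg N by (simp add: X_def Y_def field_simps power2_eq_square)
    have 2: "ay'*bx' + ax'*by' = c/N" unfolding e
      using sXY sg by (simp add: field_simps power2_eq_square)
    have 3: "c = 0 \<longrightarrow> ay'*by' = 0" unfolding e using c0 by simp
    show ?thesis using 1 2 3 by blast
  next
    case True
    then have d: "d = 0" .
    have Q: "Q = 2*P" unfolding Q_def d by simp
    have Pc: "P = sqrt 2 * c" unfolding P d using c by (simp add: real_sqrt_mult)
    have e: "ax' = 0" "by' = 0" "bx' = 1/2 * sqrt (2*P/N)" "ay' = 1/sqrt 2 * sqrt (2*P/N)"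
      unfolding ax'_def bx'_def ay'_def by'_def Q d by simp_all
    have "sqrt (2*P/N) * sqrt (2*P/N) = 2*P/N" using Pd N by simp
    then show ?thesis
      unfolding e d using N by (auto simp: Pc field_simps)
  qed
  then show "-2*ax'*bx' + ay'*by' = d/N" "ay'*bx' + ax'*by' = c/N" "c = 0 \<longrightarrow> ay'*by' = 0" by blast+
qed

theorem proposition2:
  fixes r fs :: "real^3"
  assumes "r \<noteq> 0"
  shows "force r (c1 r fs) (c2 r fs) = fs"
proof -
  define N where "N = norm r"
  define d where "d = r \<bullet> fs"
  define c where "c = norm (cross3 r fs)"
  have N: "N > 0" using assms N_def by simp
  have c: "c \<ge> 0" by (simp add: c_def)
  have rr: "r \<bullet> r = N^2" by (simp add: N_def power2_norm_eq_inner)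
  have lag: "c^2 + d^2 = N^2 * (fs \<bullet> fs)"
    using norm_cross_dot[of r fs] unfolding c_def d_def N_def
    by (simp add: power_mult_distrib power2_norm_eq_inner)
  have P: "Phi1 r fs = sqrt (2*c^2 + d^2)"
    unfolding Phi1_def c_def[symmetric] N_def[symmetric] using lag
    by (simp add: power2_norm_eq_inner)
  note S = scal[OF N c P]
  have defs: "ax r fs = - (sgn d / 2) * sqrt ((\<bar>d\<bar> + Phi1 r fs) / N)"
    "ay r fs = (1 / sqrt 2) * sqrt ((- \<bar>d\<bar> + (2 - (sgn d)^2) * Phi1 r fs) / N)"
    "bx r fs = (1 / 2) * sqrt ((\<bar>d\<bar> + (2 - (sgn d)^2) * Phi1 r fs) / N)"
    "bycomp r fs = - (sgn d / sqrt 2) * sqrt ((- \<bar>d\<bar> + Phi1 r fs) / N)"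
    unfolding ax_def ay_def bx_def bycomp_def Phi2_def d_def N_def by simp_all
  note S = S[folded defs]
  show ?thesis
  proof (cases "c = 0")
    case True
    then have cr: "cross3 r fs = 0" by (simp add: c_def)
    have R: "Rmat r fs = vector [(1 / N) *\<^sub>R r, 0, 0]" unfolding Rmat_def N_def using cr by simp
    have C1: "c1 r fs = (ax r fs / N) *\<^sub>R r + 0 *\<^sub>R 0"
      unfolding c1_def R avec_def tmv by simp
    have C2: "c2 r fs = (bx r fs / N) *\<^sub>R r + 0 *\<^sub>R 0"
      unfolding c2_def R bvec_def tmv by simp
    have F: "force r (c1 r fs) (c2 r fs) = ((-2 * ax r fs * bx r fs)/N) *\<^sub>R r"
      using force_frame[OF assms, of 0 "ax r fs" 0 "bx r fs" 0] unfolding C1 C2 N_def by simp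
    have m: "-2 * ax r fs * bx r fs = d/N" using S True by simp
    have "norm (fs - (d/N^2) *\<^sub>R r) ^2 = 0"
      unfolding power2_norm_eq_inner using lag True N
      by (simp add: inner_diff_left inner_diff_right rr d_def inner_commute field_simps power2_eq_square)
    then have "fs = (d/N^2) *\<^sub>R r" by simp
    then show ?thesis unfolding F m using N by (simp add: power2_eq_square)
  next
    case False
    then have cr: "cross3 r fs \<noteq> 0" by (simp add: c_def)
    define e2 where "e2 = (1 / (N * c)) *\<^sub>R ((r \<bullet> r) *\<^sub>R fs - d *\<^sub>R r)"
    define e3 where "e3 = (1 / c) *\<^sub>R cross3 r fs"
    have R: "Rmat r fs = vector [(1 / N) *\<^sub>R r, e2, e3]" unfolding Rmat_def N_def e2_def e3_def c_def d_def using cr by simp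
    have C1: "c1 r fs = (ax r fs / N) *\<^sub>R r + ay r fs *\<^sub>R e2"
      unfolding c1_def R avec_def tmv by simp
    have C2: "c2 r fs = (bx r fs / N) *\<^sub>R r + bycomp r fs *\<^sub>R e2"
      unfolding c2_def R bvec_def tmv by simp
    have e2r: "e2 \<bullet> r = 0" unfolding e2_def d_def
      by (simp add: inner_diff_left inner_diff_right inner_commute)
    have e2e2: "e2 \<bullet> e2 = 1" unfolding e2_def rr using lag False N c
      by (simp add: inner_diff_left inner_diff_right rr d_def inner_commute field_simps power2_eq_square)
    have ce2: "(c/N) *\<^sub>R e2 = fs - (d/N^2) *\<^sub>R r"
      unfolding e2_def rr using False N
      by (simp add: vec_eq_iff field_simps power2_eq_square)
    show ?thesis unfolding C1 C2 force_frame[OF assms e2r, unfolded N_def[symmetric]] e2e2 mult_1_right S(1) S(2) ce2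
      using N by (simp add: power2_eq_square)
  qed
qed
end
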